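(* Let $G$ be a finite simple graph with $2i$ vertices, $i\ge1$, and let $e$ be a pair of distinct vertices of $G$. If $J\in\mathcal{E}\mathcal{C}(G+e)\setminus\mathcal{E}\mathcal{C}(G)$, then for $1\le k\le i$ the number of chains in $C_k(\emptyset;G+e)$ that are $e$-singular at $J$ equals $$\sum_{p+q=k-1,\ p,q\ge0}\Big(|C_p(J;G+e)|\cdot\sum_{J'\in\mathcal{E}\mathcal{C}(G|_J)}|C_q(\emptyset;G|_{J'})|\Big).$$
   Context: All graphs are finite simple graphs; $G|_I$ is the induced subgraph on $I\subseteq V(G)$. $\mathcal{E}\mathcal{C}(G)=\{I\subseteq V(G): G|_I \text{ has no connected component of odd order}\}$. For a pair $e$ of distinct vertices, $G+e$ is $G$ with $e$ added as an edge. For a graph $G$ of even order, $\mathcal{P}(G)=\mathcal{E}\mathcal{C}(G)\cup\{V(G)\}$, ordered by inclusion; for $I\in\mathcal{P}(G)$ and $k\ge0$, $C_k(I;G)$ is the set of chains $I=I_0\subsetneq\cdots\subsetneq I_k=V(G)$ with $I_j\in\mathcal{P}(G)$ for $1\le j\le k$; we set $|C_k(I;G)|=0$ unless $0\le k\le \frac{|V(G)|}{2}-\frac{|I|}{2}$. A chain $\emptyset=I_0\subsetneq\cdots\subsetneq I_k=V(G+e)$ in $C_k(\emptyset;G+e)$ is called $e$-singular at $I_\ell$ if $\ell$ is the smallest index with $I_\ell\notin\mathcal{E}\mathcal{C}(G)$. *)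

theory Defs
  imports Main
begin

type_synonym 'a graph = "'a set \<times> 'a set set"

definition verts :: "'a graph \<Rightarrow> 'a set" where "verts G = fst G"
definition edges :: "'a graph \<Rightarrow> 'a set set" where "edges G = snd G"

definition finite_simple_graph :: "'a graph \<Rightarrow> bool" where
  "finite_simple_graph G \<longleftrightarrow> finite (verts G) \<and>
     (\<forall>x\<in>edges G. \<exists>u v. x = {u, v} \<and> u \<noteq> v \<and> u \<in> verts G \<and> v \<in> verts G)"

definition add_edge :: "'a graph \<Rightarrow> 'a set \<Rightarrow> 'a graph" where
  "add_edge G e = (verts G, insert e (edges G))"

definition induced :: "'a graph \<Rightarrow> 'a set \<Rightarrow> 'a graph" where
  "induced G I = (I, {x \<in> edges G. x \<subseteq> I})"

definition adj :: "'a graph \<Rightarrow> 'a \<Rightarrow> 'a \<Rightarrow> bool" where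
  "adj G x y \<longleftrightarrow> {x, y} \<in> edges G \<and> x \<noteq> y"

definition component :: "'a graph \<Rightarrow> 'a \<Rightarrow> 'a set" where
  "component G v = {w \<in> verts G. (adj G)\<^sup>*\<^sup>* v w}"

definition EC :: "'a graph \<Rightarrow> 'a set set" where
  "EC G = {I. I \<subseteq> verts G \<and> (\<forall>v\<in>I. even (card (component (induced G I) v)))}"

definition PP :: "'a graph \<Rightarrow> 'a set set" where
  "PP G = EC G \<union> {verts G}"

definition chains :: "'a graph \<Rightarrow> 'a set \<Rightarrow> nat \<Rightarrow> 'a set list set" where
  "chains G I k = {cs. length cs = Suc k \<and> cs ! 0 = I \<and> cs ! k = verts G \<and>
      (\<forall>j<k. cs ! j \<subset> cs ! Suc j) \<and> (\<forall>j\<in>{1..k}. cs ! j \<in> PP G)}"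

text \<open>|C_k(I;G)|, with the convention that it is 0 unless 0 \<le> k \<le> |V|/2 - |I|/2,
  written as 2k \<le> |V| - |I| over the integers\<close>
definition nchains :: "'a graph \<Rightarrow> 'a set \<Rightarrow> nat \<Rightarrow> nat" where
  "nchains G I k = (if 2 * int k \<le> int (card (verts G)) - int (card I)
                    then card (chains G I k) else 0)"

definition singular_at :: "'a graph \<Rightarrow> 'a set list \<Rightarrow> 'a set \<Rightarrow> bool" where
  "singular_at G cs J \<longleftrightarrow> (\<exists>l<length cs. cs ! l = J \<and> cs ! l \<notin> EC G \<and> (\<forall>j<l. cs ! j \<in> EC G))"

end

theory Submission
  imports Defs
begin

lemma adj_sym: "adj X x y = adj X y x"
  unfolding adj_def by (auto simp: insert_commute)

lemma R_sym: "(adj X)\<^sup>*\<^sup>* x y \<Longrightarrow> (adj X)\<^sup>*\<^sup>* y x"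
proof (induction rule: rtranclp_induct)
  case base then show ?case by simp
next
  case (step y z)
  have "adj X z y" using step(2) adj_sym by metis
  then show ?case using step(3) by (meson converse_rtranclp_into_rtranclp)
qed

lemma comp_eq:
  assumes "b \<in> component X a"
  shows "component X b = component X a"
proof -
  have ab: "(adj X)\<^sup>*\<^sup>* a b" using assms unfolding component_def by simp
  then have ba: "(adj X)\<^sup>*\<^sup>* b a" by (rule R_sym)
  show ?thesis unfolding component_def
  proof (intro Collect_cong conj_cong refl iffI)
    fix w assume "(adj X)\<^sup>*\<^sup>* b w" then show "(adj X)\<^sup>*\<^sup>* a w" using ab by (rule rtranclp_trans[rotated])
  next
    fix w assume "(adj X)\<^sup>*\<^sup>* a w" then show "(adj X)\<^sup>*\<^sup>* b w" using ba by (rule rtranclp_trans[rotated])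
  qed
qed

lemma comp_disj:
  assumes "component X a \<inter> component X b \<noteq> {}"
  shows "component X a = component X b"
proof -
  obtain w where w: "w \<in> component X a" "w \<in> component X b" using assms by blast
  have "component X w = component X a" using comp_eq[OF w(1)] .
  moreover have "component X w = component X b" using comp_eq[OF w(2)] .
  ultimately show ?thesis by simp
qed

lemma adj_induced: "adj (induced X I) x y \<Longrightarrow> x \<in> I \<and> y \<in> I"
  unfolding adj_def induced_def edges_def by auto

lemma comp_sub_closed:
  assumes "w \<in> C" "\<forall>x\<in>C. \<forall>y. adj Y x y \<longrightarrow> y \<in> C"
  shows "component Y w \<subseteq> C"
proof
  fix y assume "y \<in> component Y w"
  then have "(adj Y)\<^sup>*\<^sup>* w y" unfolding component_def by auto
  then show "y \<in> C"
  proof (induction rule: rtranclp_induct)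
    case base then show ?case using assms(1) .
  next
    case (step y z) then show ?case using assms(2) by blast
  qed
qed

lemma closed_even:
  assumes "finite C" "\<forall>w\<in>verts Y. even (card (component Y w))" "C \<subseteq> verts Y"
    "\<forall>x\<in>C. \<forall>y. adj Y x y \<longrightarrow> y \<in> C"
  shows "even (card C)"
proof -
  let ?P = "component Y ` C"
  have U: "\<Union>?P = C"
  proof
    show "\<Union>?P \<subseteq> C" using comp_sub_closed[OF _ assms(4)] by blast
    show "C \<subseteq> \<Union>?P"
    proof
      fix w assume w: "w \<in> C"
      then have "w \<in> component Y w" using assms(3) unfolding component_def by auto
      then show "w \<in> \<Union>?P" using w by blast
    qed
  qed
  have fin: "finite A" if "A \<in> ?P" for A
  proof -
    have "A \<subseteq> C" using that U by blast
    then show ?thesis using assms(1) by (rule finite_subset)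
  qed
  have pw: "pairwise disjnt ?P" unfolding pairwise_def disjnt_def
  proof (intro ballI impI)
    fix A B assume "A \<in> ?P" "B \<in> ?P" and ne: "A \<noteq> B"
    then obtain a b where ab: "A = component Y a" "B = component Y b" by blast
    show "A \<inter> B = {}" using comp_disj[of Y a b] ne ab by blast
  qed
  have "card C = sum card ?P" using card_Union_disjoint[OF pw fin] U by simp
  moreover have "even (sum card ?P)"
  proof (rule dvd_sum)
    fix A assume "A \<in> ?P"
    then show "even (card A)" using assms(2,3) by blast
  qed
  ultimately show ?thesis by simp
qed

lemma verts_induced[simp]: "verts (induced X I) = I"
  by (simp add: verts_def induced_def)

lemma EC_even:
  assumes "I \<in> EC X" "finite (verts X)"
  shows "even (card I)"
proof -
  have h1: "I \<subseteq> verts X" using assms(1) unfolding EC_def by simp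
  have h2: "finite I" using h1 assms(2) by (rule finite_subset)
  have h3: "\<forall>w\<in>verts (induced X I). even (card (component (induced X I) w))"
    using assms(1) unfolding EC_def by simp
  have h4: "\<forall>x\<in>I. \<forall>y. adj (induced X I) x y \<longrightarrow> y \<in> I" 
  proof (intro ballI allI impI)
    fix x y assume a: "adj (induced X I) x y" then show "y \<in> I" using adj_induced[OF a] by simp
  qed
  show ?thesis by (rule closed_even[OF h2 h3 _ h4]) simp
qed

lemma EC_mono:
  assumes "I \<in> EC G" "finite (verts G)"
  shows "I \<in> EC (add_edge G e)"
  unfolding EC_def
proof (intro CollectI conjI ballI)
  show "I \<subseteq> verts (add_edge G e)" using assms(1) by (simp add: EC_def add_edge_def verts_def)
  fix w assume w: "w \<in> I"
  let ?C = "component (induced (add_edge G e) I) w"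
  have fin: "finite I" using assms finite_subset unfolding EC_def by auto
  have sub: "?C \<subseteq> I" unfolding component_def by auto
  have cl: "\<forall>x\<in>?C. \<forall>y. adj (induced G I) x y \<longrightarrow> y \<in> ?C"
  proof (intro ballI allI impI)
    fix x y assume x: "x \<in> ?C" and a: "adj (induced G I) x y"
    have a2: "adj (induced (add_edge G e) I) x y"
      using a unfolding adj_def induced_def edges_def add_edge_def by auto
    then have "y \<in> I" using adj_induced by metis
    with x a2 show "y \<in> ?C" unfolding component_def
      by (auto intro: rtranclp.rtrancl_into_rtrancl)
  qed
  show "even (card ?C)"
  proof (rule closed_even[of ?C "induced G I"])
    show "finite ?C" using fin sub finite_subset by blast
    show "\<forall>w\<in>verts (induced G I). even (card (component (induced G I) w))"
      using assms(1) unfolding EC_def by simp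
  qed (use sub cl in auto)
qed

lemma induced_induced: "I \<subseteq> J \<Longrightarrow> induced (induced G J) I = induced G I"
  by (auto simp: induced_def edges_def)

lemma EC_induced: "J \<subseteq> verts G \<Longrightarrow> EC (induced G J) = {I \<in> EC G. I \<subseteq> J}"
  unfolding EC_def by (auto simp: induced_induced)

lemma chain_strict:
  assumes "cs \<in> chains X I k" "i < j" "j \<le> k"
  shows "cs ! i \<subset> cs ! j"
  using assms(2,3)
proof (induction j)
  case 0 then show ?case by simp
next
  case (Suc j)
  have s: "cs ! j \<subset> cs ! Suc j" using assms(1) Suc.prems unfolding chains_def by auto
  show ?case
  proof (cases "i = j")
    case True then show ?thesis using s by simp
  next
    case False
    then have "cs ! i \<subset> cs ! j" using Suc by auto
    then show ?thesis using s by auto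
  qed
qed

lemma chain_sub:
  assumes "cs \<in> chains X I k" "i \<le> j" "j \<le> k"
  shows "cs ! i \<subseteq> cs ! j"
proof (cases "i = j")
  case False
  then have "cs ! i \<subset> cs ! j" using chain_strict[OF assms(1)] assms(2,3) by simp
  then show ?thesis by blast
qed simp

lemma chain_V:
  assumes "cs \<in> chains X I k" "j \<le> k"
  shows "cs ! j \<subseteq> verts X"
  using chain_sub[OF assms(1) assms(2)] assms(1) unfolding chains_def by auto

lemma ev2: "even (a::nat) \<Longrightarrow> even b \<Longrightarrow> a < b \<Longrightarrow> a + 2 \<le> b"
  by (elim evenE) simp

lemma chain_card:
  assumes cs: "cs \<in> chains X I k" and fin: "finite (verts X)"
    and ev: "even (card (verts X))" "even (card I)"
  shows "2*k + card I \<le> card (verts X)"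
proof -
  have evj: "even (card (cs ! j))" if "j \<le> k" for j
  proof (cases "j = 0")
    case True
    have "cs ! 0 = I" using cs unfolding chains_def by simp
    then show ?thesis using True ev by simp
  next
    case False
    then have "cs ! j \<in> PP X" using cs that unfolding chains_def by auto
    then have "cs ! j \<in> EC X \<or> cs ! j = verts X" unfolding PP_def by blast
    then show ?thesis
    proof
      assume "cs ! j \<in> EC X" then show ?thesis using EC_even[OF _ fin] by blast
    qed (use ev in simp)
  qed
  have "j \<le> k \<Longrightarrow> 2*j + card I \<le> card (cs ! j)" for j
  proof (induction j)
    case 0 then show ?case using cs unfolding chains_def by auto
  next
    case (Suc j)
    have "cs ! j \<subset> cs ! Suc j" using cs Suc.prems unfolding chains_def by auto
    moreover have "finite (cs ! Suc j)" using chain_V[OF cs Suc.prems] fin finite_subset by blast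
    ultimately have "card (cs ! j) < card (cs ! Suc j)" by (simp add: psubset_card_mono)
    moreover have "even (card (cs ! j))" "even (card (cs ! Suc j))" using evj Suc.prems by auto
    ultimately have "card (cs ! j) + 2 \<le> card (cs ! Suc j)" by (metis ev2)
    then show ?case using Suc by auto
  qed
  then have "2*k + card I \<le> card (cs ! k)" by simp
  moreover have "cs ! k = verts X" using cs unfolding chains_def by auto
  ultimately show ?thesis by simp
qed

lemma chains_finite:
  assumes "finite (verts X)"
  shows "finite (chains X I k)"
proof (rule finite_subset)
  show "chains X I k \<subseteq> {xs. set xs \<subseteq> Pow (verts X) \<and> length xs = Suc k}"
  proof
    fix cs assume cs: "cs \<in> chains X I k"
    have "\<forall>x\<in>set cs. x \<subseteq> verts X"
    proof
      fix x assume "x \<in> set cs"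
      then obtain j where j: "j < length cs" "x = cs ! j" by (metis in_set_conv_nth)
      have "length cs = Suc k" using cs unfolding chains_def by simp
      then have "j \<le> k" using j by simp
      then show "x \<subseteq> verts X" using chain_V[OF cs, of j] j by simp
    qed
    moreover have "length cs = Suc k" using cs unfolding chains_def by simp
    ultimately show "cs \<in> {xs. set xs \<subseteq> Pow (verts X) \<and> length xs = Suc k}"
      by auto
  qed
  show "finite {xs. set xs \<subseteq> Pow (verts X) \<and> length xs = Suc k}"
    using finite_lists_length_eq[of "Pow (verts X)" "Suc k"] assms by simp
qed

lemma nchains_eq:
  assumes "finite (verts X)" "even (card (verts X))" "even (card I)"
  shows "nchains X I k = card (chains X I k)"
proof (cases "chains X I k = {}")
  case True then show ?thesis unfolding nchains_def by simp
next
  case False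
  then obtain cs where "cs \<in> chains X I k" by blast
  from chain_card[OF this assms] have "int (2*k + card I) \<le> int (card (verts X))"
    by (simp only: of_nat_le_iff)
  then have "2 * int k \<le> int (card (verts X)) - int (card I)" by simp
  then show ?thesis unfolding nchains_def by simp
qed

lemma chainsD:
  assumes "cs \<in> chains X I k"
  shows "length cs = Suc k" "cs ! 0 = I" "cs ! k = verts X" "\<And>j. j < k \<Longrightarrow> cs ! j \<subset> cs ! Suc j"
    "\<And>j. 1 \<le> j \<Longrightarrow> j \<le> k \<Longrightarrow> cs ! j \<in> PP X"
  using assms unfolding chains_def by auto

lemma chainsI:
  assumes "length cs = Suc k" "cs ! 0 = I" "cs ! k = verts X" "\<And>j. j < k \<Longrightarrow> cs ! j \<subset> cs ! Suc j"
    "\<And>j. 1 \<le> j \<Longrightarrow> j \<le> k \<Longrightarrow> cs ! j \<in> PP X"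
  shows "cs \<in> chains X I k"
  using assms unfolding chains_def by auto

lemma verts_add_edge[simp]: "verts (add_edge G e) = verts G"
  by (simp add: add_edge_def verts_def)

theorem mainTheorem6:
  fixes G :: "'a graph" and e J :: "'a set" and i k :: nat
  assumes "finite_simple_graph G"
    and "card (verts G) = 2 * i" and "i \<ge> 1"
    and "e = {u, v}" and "u \<noteq> v" and "u \<in> verts G" and "v \<in> verts G"
    and "J \<in> EC (add_edge G e) - EC G"
    and "1 \<le> k" and "k \<le> i"
  shows "card {cs \<in> chains (add_edge G e) {} k. singular_at G cs J} =
    (\<Sum>p\<in>{0..k-1}. nchains (add_edge G e) J p *
        (\<Sum>J'\<in>EC (induced G J). nchains (induced G J') {} (k - 1 - p)))"
proof -
  define H where "H = add_edge G e"
  define V where "V = verts G"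
  have vH: "verts H = V" by (simp add: H_def V_def)
  have finV: "finite V" using assms(1) unfolding finite_simple_graph_def V_def by simp
  have finH: "finite (verts H)" using finV vH by simp
  have JH: "J \<in> EC H" and JG: "J \<notin> EC G" using assms(8) H_def by auto
  have JV: "J \<subseteq> V" using JH vH unfolding EC_def by auto
  have evJ: "even (card J)" using EC_even[OF JH finH] .
  have evV: "even (card V)" using assms(2) V_def by simp
  have emp: "{} \<in> EC G" unfolding EC_def by simp
  have ECGJ: "EC (induced G J) = {I \<in> EC G. I \<subseteq> J}" using EC_induced JV V_def by simp
  have ECsub: "I \<in> EC H" if "I \<in> EC G" for I using EC_mono[OF that] finV V_def H_def by simp
  define S where "S = {cs \<in> chains H {} k. singular_at G cs J}"
  define Sp where "Sp p = {cs \<in> S. cs ! (k-p) = J}" for p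
  define A where "A p = chains H J p" for p
  define C where "C q J' = chains (induced G J') {} q" for q J'
  define B where "B p = (\<Union>J'\<in>EC (induced G J). C (k-1-p) J')" for p
  define f where "f = (\<lambda>(a::'a set list, b::'a set list). b @ a)"

  have sing_idx: "(\<forall>j<l. cs ! j \<in> EC G) \<and> 0 < l"
    if cs: "cs \<in> chains H {} k" and sg: "singular_at G cs J" and lk: "l \<le> k" and cl: "cs ! l = J" for cs l
  proof -
    obtain l' where l': "l' < length cs" "cs ! l' = J" "cs ! l' \<notin> EC G" "\<forall>j<l'. cs ! j \<in> EC G"
      using sg unfolding singular_at_def by blast
    have l'k: "l' \<le> k" using l'(1) chainsD(1)[OF cs] by simp
    have "l' = l"
    proof (rule ccontr)
      assume "l' \<noteq> l"
      then have "l' < l \<or> l < l'" by arith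
      then show False
      proof
        assume "l' < l" then have "cs ! l' \<subset> cs ! l" using chain_strict[OF cs _ lk] by simp
        then show False using l'(2) cl by simp
      next
        assume "l < l'" then have "cs ! l \<subset> cs ! l'" using chain_strict[OF cs _ l'k] by simp
        then show False using l'(2) cl by simp
      qed
    qed
    moreover have "l' \<noteq> 0" using l'(3) chainsD(2)[OF cs] emp by (cases "l' = 0") auto
    ultimately show ?thesis using l'(4) by simp
  qed

  have S_union: "S = (\<Union>p\<in>{0..k-1}. Sp p)"
  proof
    show "(\<Union>p\<in>{0..k-1}. Sp p) \<subseteq> S" unfolding Sp_def by blast
    show "S \<subseteq> (\<Union>p\<in>{0..k-1}. Sp p)"
    proof
      fix cs assume csS: "cs \<in> S"
      then have cs: "cs \<in> chains H {} k" and sg: "singular_at G cs J" unfolding S_def by auto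
      obtain l where l: "l < length cs" "cs ! l = J"
        using sg unfolding singular_at_def by blast
      have lk: "l \<le> k" using l(1) chainsD(1)[OF cs] by simp
      have "0 < l" using sing_idx[OF cs sg lk l(2)] by simp
      then have "k - l \<in> {0..k-1}" and "k - (k - l) = l" using lk by auto
      moreover have "cs \<in> Sp (k - l)" unfolding Sp_def using csS l(2) \<open>k - (k - l) = l\<close> by simp
      ultimately show "cs \<in> (\<Union>p\<in>{0..k-1}. Sp p)" by blast
    qed
  qed
  have Sp_disj: "\<forall>p\<in>{0..k-1}. \<forall>p'\<in>{0..k-1}. p \<noteq> p' \<longrightarrow> Sp p \<inter> Sp p' = {}"
  proof (intro ballI impI)
    fix p p' assume p: "p \<in> {0..k-1}" and p': "p' \<in> {0..k-1}" and ne: "p \<noteq> p'"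
    show "Sp p \<inter> Sp p' = {}"
    proof (rule ccontr)
      assume "Sp p \<inter> Sp p' \<noteq> {}"
      then obtain cs where "cs \<in> Sp p" "cs \<in> Sp p'" by blast
      then have cs: "cs \<in> chains H {} k" and c1: "cs ! (k-p) = J" and c2: "cs ! (k-p') = J"
        unfolding Sp_def S_def by auto
      have "k - p \<noteq> k - p'" using p p' ne by auto
      then have "k - p < k - p' \<or> k - p' < k - p" by arith
      then show False
      proof
        assume "k - p < k - p'"
        then have "cs ! (k-p) \<subset> cs ! (k-p')" using chain_strict[OF cs] by simp
        then show False using c1 c2 by simp
      next
        assume "k - p' < k - p"
        then have "cs ! (k-p') \<subset> cs ! (k-p)" using chain_strict[OF cs] by simp
        then show False using c1 c2 by simp
      qed
    qed
  qed
  have finSp: "\<forall>p\<in>{0..k-1}. finite (Sp p)"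
  proof
    fix p
    have "Sp p \<subseteq> chains H {} k" unfolding Sp_def S_def by blast
    then show "finite (Sp p)" using chains_finite[OF finH] by (rule finite_subset)
  qed
  have cardS: "card S = (\<Sum>p\<in>{0..k-1}. card (Sp p))"
    unfolding S_union by (rule card_UN_disjoint[OF _ finSp Sp_disj]) simp
  have Sp_eq: "Sp p = f ` (A p \<times> B p)" if pk: "p \<le> k - 1" for p
  proof
    define q where "q = k - 1 - p"
    define l where "l = k - p"
    have lq: "l = Suc q" and lk: "l \<le> k" and lpk: "l + p = k" and l1: "1 \<le> l"
      using pk assms(9) unfolding q_def l_def by auto
    show "Sp p \<subseteq> f ` (A p \<times> B p)"
    proof
      fix cs assume csS: "cs \<in> Sp p"
      then have cs: "cs \<in> chains H {} k" and sg: "singular_at G cs J" and cl: "cs ! l = J"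
        unfolding Sp_def S_def l_def by auto
      have ecl: "\<forall>j<l. cs ! j \<in> EC G" using sing_idx[OF cs sg lk cl] by simp
      note cD = chainsD[OF cs]
      define J' where "J' = cs ! q"
      have J'G: "J' \<in> EC G" using ecl lq unfolding J'_def by simp
      have J'J: "J' \<subseteq> J" using chain_sub[OF cs, of q l] lq lk cl unfolding J'_def by simp
      have J'V: "J' \<subseteq> V" using J'J JV by simp
      have J'E: "J' \<in> EC (induced G J)" using ECGJ J'G J'J by simp
      have ECJ': "EC (induced G J') = {I \<in> EC G. I \<subseteq> J'}" using EC_induced J'V V_def by simp
      have bC: "take l cs \<in> C q J'" unfolding C_def
      proof (rule chainsI)
        show "length (take l cs) = Suc q" using cD(1) lk lq by simp
        show "take l cs ! 0 = {}" using cD(2) l1 by simp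
        show "take l cs ! q = verts (induced G J')" using lq unfolding J'_def by simp
        show "take l cs ! j \<subset> take l cs ! Suc j" if "j < q" for j
          using cD(4)[of j] that lq lk by simp
        show "take l cs ! j \<in> PP (induced G J')" if "1 \<le> j" "j \<le> q" for j
        proof -
          have "cs ! j \<in> EC G" using ecl that lq by simp
          moreover have "cs ! j \<subseteq> J'" using chain_sub[OF cs, of j q] that lq lk unfolding J'_def by simp
          ultimately have "cs ! j \<in> EC (induced G J')" using ECJ' by simp
          then show ?thesis using that lq unfolding PP_def by simp
        qed
      qed
      have aA: "drop l cs \<in> A p" unfolding A_def
      proof (rule chainsI)
        show "length (drop l cs) = Suc p" using cD(1) lpk by simp
        show "drop l cs ! 0 = J" using cD(1) lk cl by simp
        show "drop l cs ! p = verts H" using cD(1) cD(3) lk lpk by simp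
        show "drop l cs ! j \<subset> drop l cs ! Suc j" if "j < p" for j
          using cD(1) cD(4)[of "l + j"] that lpk by simp
        show "drop l cs ! j \<in> PP H" if "1 \<le> j" "j \<le> p" for j
          using cD(1) cD(5)[of "l + j"] that lpk by simp
      qed
      have "take l cs \<in> B p" unfolding B_def using bC J'E q_def by blast
      moreover have "cs = f (drop l cs, take l cs)" unfolding f_def by simp
      ultimately show "cs \<in> f ` (A p \<times> B p)" using aA by blast
    qed
    show "f ` (A p \<times> B p) \<subseteq> Sp p"
    proof
      fix cs assume "cs \<in> f ` (A p \<times> B p)"
      then obtain a b J' where aA: "a \<in> A p" and J'E: "J' \<in> EC (induced G J)"
        and bC: "b \<in> C q J'" and csd: "cs = b @ a"
        unfolding f_def B_def q_def by auto
      note aD = chainsD[OF aA[unfolded A_def]]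
      note bD = chainsD[OF bC[unfolded C_def]]
      have J'G: "J' \<in> EC G" and J'J: "J' \<subseteq> J" using J'E ECGJ by auto
      have J'ne: "J' \<noteq> J" using J'G JG by auto
      have J'V: "J' \<subseteq> V" using J'J JV by simp
      have ECJ': "EC (induced G J') = {I \<in> EC G. I \<subseteq> J'}" using EC_induced J'V V_def by simp
      have lb: "length b = l" using bD(1) lq by simp
      have nth: "cs ! j = (if j < l then b ! j else a ! (j - l))" for j
        using csd lb by (simp add: nth_append)
      have bEC: "b ! j \<in> EC G" if "j < l" for j
      proof (cases "j = 0")
        case True then show ?thesis using bD(2) emp by simp
      next
        case False
        then have "b ! j \<in> PP (induced G J')" using bD(5)[of j] that lq by simp
        then show ?thesis using ECJ' J'G unfolding PP_def by auto
      qed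
      have csc: "cs \<in> chains H {} k"
      proof (rule chainsI)
        show "length cs = Suc k" using csd lb aD(1) lpk by simp
        show "cs ! 0 = {}" using nth[of 0] l1 bD(2) by simp
        have "k - l = p" using lpk by simp
        then show "cs ! k = verts H" using nth[of k] lpk aD(3) by simp
        show "cs ! j \<subset> cs ! Suc j" if "j < k" for j
        proof -
          consider (b) "Suc j < l" | (m) "Suc j = l" | (a) "l \<le> j" by arith
          then show ?thesis
          proof cases
            case b then show ?thesis using nth[of j] nth[of "Suc j"] bD(4)[of j] lq by simp
          next
            case m
            then have "cs ! j = J'" "cs ! Suc j = J" using nth[of j] nth[of "Suc j"] bD(3) aD(2) lq by auto
            then show ?thesis using J'J J'ne by auto
          next
            case a
            then have "cs ! j = a ! (j - l)" "cs ! Suc j = a ! Suc (j - l)"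
              using nth[of j] nth[of "Suc j"] by (auto simp: Suc_diff_le)
            moreover have "j - l < p" using a that lpk by arith
            ultimately show ?thesis using aD(4) by simp
          qed
        qed
        show "cs ! j \<in> PP H" if "1 \<le> j" "j \<le> k" for j
        proof -
          consider (b) "j < l" | (m) "j = l" | (a) "l < j" by arith
          then show ?thesis
          proof cases
            case b then show ?thesis using nth[of j] bEC[of j] ECsub unfolding PP_def by simp
          next
            case m then show ?thesis using nth[of j] aD(2) JH unfolding PP_def by simp
          next
            case a then show ?thesis using nth[of j] aD(5)[of "j - l"] that lpk by simp
          qed
        qed
      qed
      have csl: "cs ! l = J" using nth[of l] aD(2) by simp
      have "singular_at G cs J" unfolding singular_at_def
      proof (intro exI conjI allI impI)
        show "l < length cs" using csd lb aD(1) by simp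
        show "cs ! l = J" using csl .
        show "cs ! l \<notin> EC G" using csl JG by simp
        show "cs ! j \<in> EC G" if "j < l" for j using nth[of j] bEC[of j] that by simp
      qed
      then show "cs \<in> Sp p" unfolding Sp_def S_def using csc csl l_def by simp
    qed
  qed
  have lenB: "length b = Suc (k-1-p)" if bB: "b \<in> B p" for b p
  proof -
    obtain J' where "b \<in> C (k-1-p) J'" using bB unfolding B_def by blast
    then show ?thesis unfolding C_def using chainsD(1) by blast
  qed
  have inj: "inj_on f (A p \<times> B p)" for p
  proof (rule inj_onI)
    fix x y assume x: "x \<in> A p \<times> B p" and y: "y \<in> A p \<times> B p" and fxy: "f x = f y"
    obtain a b where ab: "x = (a, b)" by (cases x)
    obtain a' b' where ab': "y = (a', b')" by (cases y)
    have "length b = length b'" using lenB x y ab ab' by auto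
    moreover have "b @ a = b' @ a'" using fxy ab ab' unfolding f_def by simp
    ultimately show "x = y" using ab ab' by simp
  qed
  have cardB: "card (B p) = (\<Sum>J'\<in>EC (induced G J). card (C (k-1-p) J'))" for p
    unfolding B_def
  proof (rule card_UN_disjoint)
    have "EC (induced G J) \<subseteq> Pow J" unfolding EC_def by auto
    moreover have "finite J" using finite_subset[OF JV finV] .
    ultimately show "finite (EC (induced G J))" by (meson finite_Pow_iff finite_subset)
    show "\<forall>J'\<in>EC (induced G J). finite (C (k - 1 - p) J')"
    proof
      fix J' assume "J' \<in> EC (induced G J)"
      then have "J' \<subseteq> J" unfolding EC_def by simp
      then have "finite J'" using finite_subset[OF _ finite_subset[OF JV finV]] by blast
      then show "finite (C (k - 1 - p) J')" unfolding C_def using chains_finite[of "induced G J'"] by simp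
    qed
    show "\<forall>J1\<in>EC (induced G J). \<forall>J2\<in>EC (induced G J). J1 \<noteq> J2 \<longrightarrow> C (k - 1 - p) J1 \<inter> C (k - 1 - p) J2 = {}"
    proof (intro ballI impI)
      fix J1 J2 :: "'a set" assume "J1 \<noteq> J2"
      show "C (k - 1 - p) J1 \<inter> C (k - 1 - p) J2 = {}"
      proof (rule ccontr)
        assume "C (k - 1 - p) J1 \<inter> C (k - 1 - p) J2 \<noteq> {}"
        then obtain b where "b \<in> C (k - 1 - p) J1" "b \<in> C (k - 1 - p) J2" by blast
        then have "b ! (k-1-p) = J1" "b ! (k-1-p) = J2" unfolding C_def using chainsD(3) verts_induced by metis+
        then show False using \<open>J1 \<noteq> J2\<close> by simp
      qed
    qed
  qed
  have nA: "nchains H J p = card (A p)" for p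
    unfolding A_def using nchains_eq[OF finH] vH evV evJ by simp
  have nC: "nchains (induced G J') {} q = card (C q J')" if "J' \<in> EC (induced G J)" for J' q
  proof -
    have J'G: "J' \<in> EC G" and J'J: "J' \<subseteq> J" using that ECGJ by auto
    have "finite J'" using finite_subset[OF subset_trans[OF J'J JV] finV] .
    moreover have "even (card J')" using EC_even[OF J'G] finV V_def by simp
    ultimately show ?thesis unfolding C_def using nchains_eq[of "induced G J'" "{}" q] by simp
  qed
  have "card S = (\<Sum>p\<in>{0..k-1}. card (A p) * card (B p))"
  proof -
    have "card (Sp p) = card (A p) * card (B p)" if "p \<in> {0..k-1}" for p
    proof -
      have "card (Sp p) = card (A p \<times> B p)" using Sp_eq[of p] that card_image[OF inj[of p]] by simp
      then show ?thesis by (simp add: card_cartesian_product)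
    qed
    then show ?thesis using cardS by simp
  qed
  also have "\<dots> = (\<Sum>p\<in>{0..k-1}. nchains H J p *
        (\<Sum>J'\<in>EC (induced G J). nchains (induced G J') {} (k - 1 - p)))"
    using nA nC cardB by simp
  finally show ?thesis unfolding S_def H_def .
qed

end
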